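(* Let $G$ be a countably infinite connected HE-homogeneous graph that contains a pair of distinct non-adjacent vertices. Then $G$ has no finite maximal independent sets and no finite maximal cliques. In particular, every vertex of $G$ has infinite degree and infinite codegree.
   Context: All graphs are undirected and loopless; subgraphs are induced. The codegree of a vertex is its degree in the complement graph. A homomorphism maps adjacent vertices to adjacent vertices. $G$ is HE-homogeneous if every homomorphism between finite induced subgraphs of $G$ is the restriction of a surjective endomorphism of $G$. *)

theory Defs
  imports Main "HOL-Library.Countable_Set"
begin

text \<open>A simple graph is given by a vertex set V and an edge relation E that is
symmetric and irreflexive on V. Only the restriction of E to V matters.\<close>

definition simple_graph :: "'a set \<Rightarrow> ('a \<Rightarrow> 'a \<Rightarrow> bool) \<Rightarrow> bool" where
  "simple_graph V E \<longleftrightarrow> (\<forall>x\<in>V. \<forall>y\<in>V. E x y \<longrightarrow> E y x) \<and> (\<forall>x\<in>V. \<not> E x x)"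

definition connected_graph :: "'a set \<Rightarrow> ('a \<Rightarrow> 'a \<Rightarrow> bool) \<Rightarrow> bool" where
  "connected_graph V E \<longleftrightarrow> V \<noteq> {} \<and>
     (\<forall>u\<in>V. \<forall>v\<in>V. (\<lambda>x y. x \<in> V \<and> y \<in> V \<and> E x y)\<^sup>*\<^sup>* u v)"

definition graph_hom :: "('a \<Rightarrow> 'a \<Rightarrow> bool) \<Rightarrow> 'a set \<Rightarrow> 'a set \<Rightarrow> ('a \<Rightarrow> 'a) \<Rightarrow> bool" where
  "graph_hom E A B f \<longleftrightarrow> (\<forall>x\<in>A. f x \<in> B) \<and> (\<forall>x\<in>A. \<forall>y\<in>A. E x y \<longrightarrow> E (f x) (f y))"

definition HE_homogeneous :: "'a set \<Rightarrow> ('a \<Rightarrow> 'a \<Rightarrow> bool) \<Rightarrow> bool" where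
  "HE_homogeneous V E \<longleftrightarrow>
     (\<forall>A B f. A \<subseteq> V \<and> B \<subseteq> V \<and> finite A \<and> finite B \<and> graph_hom E A B f \<longrightarrow>
        (\<exists>g. graph_hom E V V g \<and> g ` V = V \<and> (\<forall>x\<in>A. g x = f x)))"

definition independent_set :: "'a set \<Rightarrow> ('a \<Rightarrow> 'a \<Rightarrow> bool) \<Rightarrow> 'a set \<Rightarrow> bool" where
  "independent_set V E I \<longleftrightarrow> I \<subseteq> V \<and> (\<forall>x\<in>I. \<forall>y\<in>I. \<not> E x y)"

definition clique :: "'a set \<Rightarrow> ('a \<Rightarrow> 'a \<Rightarrow> bool) \<Rightarrow> 'a set \<Rightarrow> bool" where
  "clique V E C \<longleftrightarrow> C \<subseteq> V \<and> (\<forall>x\<in>C. \<forall>y\<in>C. x \<noteq> y \<longrightarrow> E x y)"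

definition maximal_independent_set :: "'a set \<Rightarrow> ('a \<Rightarrow> 'a \<Rightarrow> bool) \<Rightarrow> 'a set \<Rightarrow> bool" where
  "maximal_independent_set V E I \<longleftrightarrow> independent_set V E I \<and>
     (\<forall>J. independent_set V E J \<and> I \<subseteq> J \<longrightarrow> J = I)"

definition maximal_clique :: "'a set \<Rightarrow> ('a \<Rightarrow> 'a \<Rightarrow> bool) \<Rightarrow> 'a set \<Rightarrow> bool" where
  "maximal_clique V E C \<longleftrightarrow> clique V E C \<and>
     (\<forall>D. clique V E D \<and> C \<subseteq> D \<longrightarrow> D = C)"

definition degree_set :: "'a set \<Rightarrow> ('a \<Rightarrow> 'a \<Rightarrow> bool) \<Rightarrow> 'a \<Rightarrow> 'a set" where
  "degree_set V E v = {u \<in> V. E v u}"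

definition codegree_set :: "'a set \<Rightarrow> ('a \<Rightarrow> 'a \<Rightarrow> bool) \<Rightarrow> 'a \<Rightarrow> 'a set" where
  "codegree_set V E v = {u \<in> V. u \<noteq> v \<and> \<not> E v u}"

end

theory Submission
  imports Defs
begin

lemma leave_set:
  assumes "R\<^sup>*\<^sup>* a b" "a \<in> P" "b \<notin> P"
  shows "\<exists>x y. R x y \<and> x \<in> P \<and> y \<notin> P"
  using assms by (induction rule: rtranclp_induct) blast+

lemma finite_max_ext:
  assumes "finite F" "P I0" "I0 \<subseteq> F"
  shows "\<exists>I. P I \<and> I0 \<subseteq> I \<and> I \<subseteq> F \<and> (\<forall>J. P J \<and> I \<subseteq> J \<and> J \<subseteq> F \<longrightarrow> J = I)"
proof -
  define S where "S = {I. P I \<and> I0 \<subseteq> I \<and> I \<subseteq> F}"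
  have fS: "finite S" unfolding S_def using assms(1) by (auto intro: finite_subset[of _ "Pow F"])
  have "I0 \<in> S" unfolding S_def using assms by auto
  hence ne: "card ` S \<noteq> {}" by auto
  have "Max (card ` S) \<in> card ` S" using fS ne by (intro Max_in) auto
  then obtain I where I: "I \<in> S" "card I = Max (card ` S)" by auto
  have "\<forall>J. P J \<and> I \<subseteq> J \<and> J \<subseteq> F \<longrightarrow> J = I"
  proof (intro allI impI)
    fix J assume J: "P J \<and> I \<subseteq> J \<and> J \<subseteq> F"
    hence "J \<in> S" using I(1) unfolding S_def by auto
    hence "card J \<le> card I" using I(2) fS by simp
    moreover have "finite J" using J assms(1) finite_subset by blast
    ultimately show "J = I" using J card_subset_eq by (metis antisym card_mono)
  qed
  thus ?thesis using I(1) unfolding S_def by auto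
qed

theorem proposition5p5:
  fixes V :: "'a set" and E :: "'a \<Rightarrow> 'a \<Rightarrow> bool"
  assumes "simple_graph V E"
    and "countable V" and "infinite V"
    and "connected_graph V E"
    and "HE_homogeneous V E"
    and "\<exists>x\<in>V. \<exists>y\<in>V. x \<noteq> y \<and> \<not> E x y"
  shows "(\<nexists>I. finite I \<and> maximal_independent_set V E I)
    \<and> (\<nexists>C. finite C \<and> maximal_clique V E C)
    \<and> (\<forall>v\<in>V. infinite (degree_set V E v) \<and> infinite (codegree_set V E v))"
proof -
  have sym: "\<And>x y. x \<in> V \<Longrightarrow> y \<in> V \<Longrightarrow> E x y \<Longrightarrow> E y x"
    and irr: "\<And>x. x \<in> V \<Longrightarrow> \<not> E x x" using assms(1) unfolding simple_graph_def by auto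
  have HE: "\<And>A B f. A \<subseteq> V \<Longrightarrow> B \<subseteq> V \<Longrightarrow> finite A \<Longrightarrow> finite B \<Longrightarrow> graph_hom E A B f \<Longrightarrow>
        (\<exists>g. graph_hom E V V g \<and> g ` V = V \<and> (\<forall>x\<in>A. g x = f x))"
    using assms(5) unfolding HE_homogeneous_def by blast
  obtain x y where xy: "x \<in> V" "y \<in> V" "x \<noteq> y" "\<not> E x y" using assms(6) by blast
  have P1: "\<nexists>I. finite I \<and> maximal_independent_set V E I"
  proof
    assume "\<exists>I. finite I \<and> maximal_independent_set V E I"
    then obtain I where I: "finite I" "independent_set V E I"
      "\<And>J. independent_set V E J \<Longrightarrow> I \<subseteq> J \<Longrightarrow> J = I"
      unfolding maximal_independent_set_def by blast
    have IV: "I \<subseteq> V" and Iind: "\<forall>a\<in>I. \<forall>b\<in>I. \<not> E a b" using I(2) unfolding independent_set_def by auto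
    have "graph_hom E I {x} (\<lambda>_. x)" using Iind unfolding graph_hom_def by auto
    then obtain g where g: "graph_hom E V V g" "g ` V = V" "\<forall>a\<in>I. g a = x"
      using HE[of I "{x}" "\<lambda>_. x"] IV I(1) xy by auto
    have gh: "\<And>a b. a \<in> V \<Longrightarrow> b \<in> V \<Longrightarrow> E a b \<Longrightarrow> E (g a) (g b)" using g(1) unfolding graph_hom_def by auto
    obtain w where w: "w \<in> V" "g w = y" using g(2) xy(2) by (metis imageE)
    have "w \<notin> I" using g(3) w xy(3) by auto
    hence "\<not> independent_set V E (insert w I)" using I(3)[of "insert w I"] by auto
    then obtain a b where ab: "a \<in> insert w I" "b \<in> insert w I" "E a b"
      unfolding independent_set_def using IV w(1) by auto
    show False
    proof -
      have "a \<in> V" "b \<in> V" using ab IV w(1) by auto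
      note gab = gh[OF this ab(3)]
      show False
      proof (cases "a = w")
        case True
        then show ?thesis
        proof (cases "b = w")
          case True with \<open>a = w\<close> ab(3) irr w(1) show ?thesis by auto
        next
          case False
          hence "b \<in> I" using ab by auto
          hence "E y x" using gab \<open>a = w\<close> w g(3) by auto
          thus ?thesis using sym xy by blast
        qed
      next
        case False
        hence aI: "a \<in> I" using ab by auto
        show ?thesis
        proof (cases "b = w")
          case True
          hence "E x y" using gab aI w g(3) by auto
          thus ?thesis using xy by blast
        next
          case False
          hence "b \<in> I" using ab by auto
          thus ?thesis using aI ab(3) Iind by auto
        qed
      qed
    qed
  qed
  have P2: "\<nexists>C. finite C \<and> maximal_clique V E C"
  proof
    assume "\<exists>C. finite C \<and> maximal_clique V E C"
    then obtain C where C: "finite C" "clique V E C"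
      "\<And>D. clique V E D \<Longrightarrow> C \<subseteq> D \<Longrightarrow> D = C"
      unfolding maximal_clique_def by blast
    have CV: "C \<subseteq> V" and Ccl: "\<forall>a\<in>C. \<forall>b\<in>C. a \<noteq> b \<longrightarrow> E a b" using C(2) unfolding clique_def by auto
    have "C \<noteq> {}"
    proof
      assume "C = {}"
      hence "clique V E {x}" using xy unfolding clique_def by auto
      thus False using C(3)[of "{x}"] \<open>C = {}\<close> by auto
    qed
    then obtain c where c: "c \<in> C" by auto
    obtain w where w: "w \<in> V" "w \<notin> C" using assms(3) C(1) CV
      by (metis finite_subset subsetI)
    have "(\<lambda>x y. x \<in> V \<and> y \<in> V \<and> E x y)\<^sup>*\<^sup>* c w" using assms(4) c CV w(1)
      unfolding connected_graph_def by blast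
    from leave_set[OF this c w(2)] obtain c1 u where cu: "c1 \<in> V" "u \<in> V" "E c1 u" "c1 \<in> C" "u \<notin> C"
      by blast
    define X where "X = insert u (C - {c1})"
    define f where "f = (\<lambda>z. if z = u then c1 else z)"
    have fX: "f ` X = C" unfolding X_def f_def using cu(4,5) by auto
    have finj: "inj_on f X" unfolding X_def f_def inj_on_def using cu by auto
    have XV: "X \<subseteq> V" unfolding X_def using CV cu by auto
    have hom: "graph_hom E X C f" unfolding graph_hom_def
    proof (intro conjI ballI impI)
      fix z assume "z \<in> X" thus "f z \<in> C" using fX by auto
    next
      fix a b assume "a \<in> X" "b \<in> X" "E a b"
      hence "a \<noteq> b" using irr XV by auto
      hence "f a \<noteq> f b" using finj \<open>a \<in> X\<close> \<open>b \<in> X\<close> inj_on_def by metis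
      thus "E (f a) (f b)" using Ccl fX \<open>a \<in> X\<close> \<open>b \<in> X\<close> by auto
    qed
    have "finite X" unfolding X_def using C(1) by auto
    then obtain g where g: "graph_hom E V V g" "\<forall>a\<in>X. g a = f a"
      using HE[OF XV CV _ C(1) hom] by auto
    have gh: "\<And>a b. a \<in> V \<Longrightarrow> b \<in> V \<Longrightarrow> E a b \<Longrightarrow> E (g a) (g b)" 
      and gV: "\<And>a. a \<in> V \<Longrightarrow> g a \<in> V" using g(1) unfolding graph_hom_def by auto
    have adj: "\<forall>a\<in>X. E c1 a" unfolding X_def using cu Ccl by auto
    have adjC: "\<forall>b\<in>C. E (g c1) b"
    proof
      fix b assume "b \<in> C"
      then obtain a where a: "a \<in> X" "f a = b" using fX by auto
      have "E (g c1) (g a)" using gh[OF cu(1)] adj XV a(1) by auto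
      thus "E (g c1) b" using a g(2) by auto
    qed
    have gc1: "g c1 \<in> V" using gV cu(1) by auto
    have "g c1 \<notin> C" using adjC irr gc1 by auto
    have "clique V E (insert (g c1) C)" unfolding clique_def
      using CV gc1 Ccl adjC sym by auto
    thus False using C(3) \<open>g c1 \<notin> C\<close> by auto
  qed
  have P3: "\<forall>v\<in>V. infinite (degree_set V E v) \<and> infinite (codegree_set V E v)"
  proof (intro ballI conjI)
    fix v assume v: "v \<in> V"
    show "infinite (degree_set V E v)"
    proof
      assume fin: "finite (degree_set V E v)"
      define F where "F = insert v (degree_set V E v)"
      have "clique V E {v}" using v unfolding clique_def by auto
      from finite_max_ext[of F "clique V E" "{v}", OF _ this] fin
      obtain I where I: "clique V E I" "v \<in> I" "I \<subseteq> F"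
          "\<And>J. clique V E J \<Longrightarrow> I \<subseteq> J \<Longrightarrow> J \<subseteq> F \<Longrightarrow> J = I"
        unfolding F_def by auto
      have "maximal_clique V E I" unfolding maximal_clique_def
      proof (intro conjI allI impI)
        fix J assume J: "clique V E J \<and> I \<subseteq> J"
        have "J \<subseteq> F" using J I(2) unfolding F_def degree_set_def clique_def by auto
        thus "J = I" using I(4) J by auto
      qed (use I in auto)
      moreover have "finite I" using I(3) fin F_def finite_subset by auto
      ultimately show False using P2 by auto
    qed
    show "infinite (codegree_set V E v)"
    proof
      assume fin: "finite (codegree_set V E v)"
      define F where "F = insert v (codegree_set V E v)"
      have "independent_set V E {v}" using v irr unfolding independent_set_def by auto
      from finite_max_ext[of F "independent_set V E" "{v}", OF _ this] fin
      obtain I where I: "independent_set V E I" "v \<in> I" "I \<subseteq> F"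
          "\<And>J. independent_set V E J \<Longrightarrow> I \<subseteq> J \<Longrightarrow> J \<subseteq> F \<Longrightarrow> J = I"
        unfolding F_def by auto
      have "maximal_independent_set V E I" unfolding maximal_independent_set_def
      proof (intro conjI allI impI)
        fix J assume J: "independent_set V E J \<and> I \<subseteq> J"
        have "J \<subseteq> F" using J I(2) unfolding F_def codegree_set_def independent_set_def by auto
        thus "J = I" using I(4) J by auto
      qed (use I in auto)
      moreover have "finite I" using I(3) fin F_def finite_subset by auto
      ultimately show False using P1 by auto
    qed
  qed
  show ?thesis using P1 P2 P3 by blast
qed

end
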